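(* Let $k$ be an algebraically closed field of characteristic zero and let $A$ be an integral normal $k$-algebra. Then for every nonzero locally nilpotent $k$-derivation $\partial$ of $A$, the Rees algebra $R(A,\partial)$ is integral and normal.
   Context: For a locally nilpotent $k$-derivation $\partial$ of $A$, the Rees algebra is $R(A,\partial)=\bigoplus_{n\geq0}\ker(\partial^{n+1})\,\upsilon^n\subseteq A[\upsilon]$, graded by $n$, with multiplication induced by $A[\upsilon]$. *)

theory Defs
  imports "HOL-Computational_Algebra.Polynomial" "HOL-Computational_Algebra.Fraction_Field"
begin

definition subring_set :: "'a::comm_ring_1 set \<Rightarrow> bool" where
  "subring_set S \<longleftrightarrow> 0 \<in> S \<and> 1 \<in> S \<and>
     (\<forall>a\<in>S. \<forall>b\<in>S. a + b \<in> S \<and> a - b \<in> S \<and> a * b \<in> S)"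

definition subfield_set :: "'a::comm_ring_1 set \<Rightarrow> bool" where
  "subfield_set K \<longleftrightarrow> subring_set K \<and> (\<forall>x\<in>K. x \<noteq> 0 \<longrightarrow> (\<exists>y\<in>K. x * y = 1))"

definition alg_closed_subfield :: "'a::comm_ring_1 set \<Rightarrow> bool" where
  "alg_closed_subfield K \<longleftrightarrow> subfield_set K \<and>
     (\<forall>p::'a poly. (\<forall>i. coeff p i \<in> K) \<and> degree p > 0 \<longrightarrow> (\<exists>x\<in>K. poly p x = 0))"

definition integral_subring :: "'a::comm_ring_1 set \<Rightarrow> bool" where
  "integral_subring S \<longleftrightarrow> subring_set S \<and> (1::'a) \<noteq> 0 \<and>
     (\<forall>a\<in>S. \<forall>b\<in>S. a * b = 0 \<longrightarrow> a = 0 \<or> b = 0)"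

definition frac_field_of :: "'a::idom set \<Rightarrow> 'a fract set" where
  "frac_field_of S = {x. \<exists>a\<in>S. \<exists>b\<in>S. b \<noteq> 0 \<and> x = Fract a b}"

definition integral_over :: "'a::idom set \<Rightarrow> 'a fract \<Rightarrow> bool" where
  "integral_over S x \<longleftrightarrow> (\<exists>p::'a poly. (\<forall>i. coeff p i \<in> S) \<and> lead_coeff p = 1 \<and>
      poly (map_poly (\<lambda>a. Fract a 1) p) x = 0)"

definition normal_subring :: "'a::idom set \<Rightarrow> bool" where
  "normal_subring S \<longleftrightarrow> integral_subring S \<and>
     (\<forall>x\<in>frac_field_of S. integral_over S x \<longrightarrow> x \<in> (\<lambda>a. Fract a 1) ` S)"

definition is_derivation :: "'a::comm_ring_1 set \<Rightarrow> ('a \<Rightarrow> 'a) \<Rightarrow> bool" where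
  "is_derivation K D \<longleftrightarrow> (\<forall>x y. D (x + y) = D x + D y) \<and>
     (\<forall>x y. D (x * y) = x * D y + y * D x) \<and> (\<forall>c\<in>K. \<forall>x. D (c * x) = c * D x)"

definition locally_nilpotent :: "('a::zero \<Rightarrow> 'a) \<Rightarrow> bool" where
  "locally_nilpotent D \<longleftrightarrow> (\<forall>a. \<exists>n. (D ^^ n) a = 0)"

text \<open>Rees algebra R(A,D) = sum_n ker(D^(n+1)) v^n, as a subset of A[v].\<close>
definition rees_algebra :: "('a::comm_ring_1 \<Rightarrow> 'a) \<Rightarrow> 'a poly set" where
  "rees_algebra D = {p. \<forall>n. (D ^^ (Suc n)) (coeff p n) = 0}"

end

theory Submission
  imports Defs "HOL-Computational_Algebra.Polynomial_Factorial"
begin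


lemma D0: fixes D :: "'a::comm_ring_1 \<Rightarrow> 'a" assumes hadd: "\<forall>x y. D (x + y) = D x + D y" shows "D 0 = 0"
proof -
  have h: "D 0 = D 0 + D 0" using hadd[rule_format, of 0 0] by (simp only: add_0_right)
  show ?thesis by (rule add_cancel_right_right[THEN iffD1, OF h])
qed

lemma Dn_add: fixes D :: "'a::comm_ring_1 \<Rightarrow> 'a" assumes hadd: "\<forall>x y. D (x + y) = D x + D y"
  shows "(D^^n) (x + y) = (D^^n) x + (D^^n) y"
  by (induction n) (auto simp: hadd)

lemma Dn_0: fixes D :: "'a::comm_ring_1 \<Rightarrow> 'a" assumes hadd: "\<forall>x y. D (x + y) = D x + D y"
  shows "(D^^n) 0 = 0"
  by (induction n) (auto simp: D0[OF hadd])

lemma Dn_sum: fixes D :: "'a::comm_ring_1 \<Rightarrow> 'a" assumes hadd: "\<forall>x y. D (x + y) = D x + D y"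
  shows "(D^^n) (sum f A) = (\<Sum>i\<in>A. (D^^n) (f i))"
  by (induction A rule: infinite_finite_induct) (auto simp: Dn_add[OF hadd] Dn_0[OF hadd])

lemma Dn_uminus: fixes D :: "'a::comm_ring_1 \<Rightarrow> 'a" assumes hadd: "\<forall>x y. D (x + y) = D x + D y"
  shows "(D^^n) (- x) = - (D^^n) x"
proof -
  have "(D^^n) (x + - x) = (D^^n) x + (D^^n) (-x)" by (rule Dn_add[OF hadd])
  then have "(D^^n) x + (D^^n) (-x) = 0" by (simp add: Dn_0[OF hadd])
  from neg_eq_iff_add_eq_0[THEN iffD2, OF this] show ?thesis by (rule sym)
qed

lemma Dn_mono: fixes D :: "'a::comm_ring_1 \<Rightarrow> 'a" assumes hadd: "\<forall>x y. D (x + y) = D x + D y"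
  and "(D^^m) x = 0" and "m \<le> k" shows "(D^^k) x = 0"
proof -
  define j where "j = k - m"
  have k: "k = j + m" using \<open>m \<le> k\<close> j_def by simp
  show ?thesis unfolding k funpow_add o_def using assms(2) by (simp add: Dn_0[OF hadd])
qed

lemma leibniz:
  fixes D :: "'a::comm_ring_1 \<Rightarrow> 'a" assumes hadd: "\<forall>x y. D (x + y) = D x + D y"
    and hmul: "\<forall>x y. D (x * y) = x * D y + y * D x"
  shows "\<forall>p q a b. p + q = s \<longrightarrow> (D^^Suc p) a = 0 \<longrightarrow> (D^^Suc q) b = 0 \<longrightarrow>
      (D^^(p+q)) (a*b) = of_nat ((p+q) choose p) * (D^^p) a * (D^^q) b"
proof (induction s)
  case 0
  then show ?case by simp
next
  case (Suc s)
  show ?case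
  proof (intro allI impI)
    fix p q a b
    assume s: "p + q = Suc s" and a: "(D^^Suc p) a = 0" and b: "(D^^Suc q) b = 0"
    have split: "(D^^(p+q)) (a*b) = (D^^s) (a * D b) + (D^^s) (b * D a)"
      using s by (simp add: funpow_Suc_right hmul Dn_add[OF hadd] del: funpow.simps)
    have Da: "(D^^Suc k) (D a) = (D^^Suc (Suc k)) a" for k
      by (simp only: funpow_Suc_right o_def)
    show "(D^^(p+q)) (a*b) = of_nat ((p+q) choose p) * (D^^p) a * (D^^q) b"
    proof (cases p)
      case 0
      then have "D a = 0" using a by simp
      then have q: "q = Suc s" using s 0 by simp
      have "(D^^Suc s) (D b) = 0" using b q by (simp only: funpow_Suc_right o_def)
      then have "(D^^(0+s)) (a * D b) = of_nat ((0+s) choose 0) * (D^^0) a * (D^^s) (D b)"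
        using Suc.IH a 0 by (metis add_0)
      then show ?thesis using 0 q split \<open>D a = 0\<close> by (simp add: Dn_0[OF hadd] funpow_simps_right del: funpow.simps)
    next
      case (Suc p')
      note p = Suc
      show ?thesis
      proof (cases q)
        case 0
        then have "D b = 0" using b by simp
        have "(D^^Suc p') (D a) = 0" using a p by (simp only: funpow_Suc_right o_def)
        have i1: "0 + p' = s" using s p 0 by simp
        have i2: "(D^^Suc 0) b = 0" using b 0 by simp
        have "(D^^(0+p')) (b * D a) = of_nat ((0+p') choose 0) * (D^^0) b * (D^^p') (D a)"
          by (rule Suc.IH[rule_format, OF i1 i2 \<open>(D^^Suc p') (D a) = 0\<close>])
        then show ?thesis using 0 p s split \<open>D b = 0\<close>
          by (simp add: Dn_0[OF hadd] funpow_simps_right mult.commute del: funpow.simps)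
      next
        case (Suc q')
        note q = Suc
        have a1: "(D^^Suc p') (D a) = 0" using a p by (simp only: funpow_Suc_right o_def)
        have b1: "(D^^Suc q') (D b) = 0" using b q by (simp only: funpow_Suc_right o_def)
        have e1: "(D^^(p+q')) (a * D b) = of_nat ((p+q') choose p) * (D^^p) a * (D^^q') (D b)"
          by (rule Suc.IH[rule_format, OF _ a b1]) (use s q in simp)
        have e2: "(D^^(q+p')) (b * D a) = of_nat ((q+p') choose q) * (D^^q) b * (D^^p') (D a)"
          by (rule Suc.IH[rule_format, OF _ b a1]) (use s p in simp)
        have sp: "s = p + q'" "s = q + p'" using s p q by auto
        have "(D^^q') (D b) = (D^^q) b" using q by (simp add: funpow_swap1)
        moreover have "(D^^p') (D a) = (D^^p) a" using p by (simp add: funpow_swap1)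
        moreover have "(p+q) choose p = ((p+q') choose p) + ((q+p') choose q)"
        proof -
          have "((p+q) choose p) = ((Suc (p+q')) choose (Suc p'))" using p q by simp
          also have "... = ((p + q') choose p') + ((p+q') choose (Suc p'))" by simp
          also have "(p + q') choose (Suc p') = (p+q') choose p" using p by simp
          also have "(p + q') choose p' = (q + p') choose q"
          proof -
            have "(p + q') choose p' = (p + q') choose ((p+q') - p')"
              by (rule binomial_symmetric) (use p in simp)
            also have "(p+q') - p' = q" using p q by simp
            finally show ?thesis using p q by (simp add: add.commute)
          qed
          finally show ?thesis by simp
        qed
        ultimately show ?thesis using split e1 e2 sp by (simp add: algebra_simps)
      qed
    qed
  qed
qed



declare funpow.simps(2)[simp del]

definition der :: "('a::comm_ring_1 \<Rightarrow> 'a) \<Rightarrow> bool" where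
  "der D \<longleftrightarrow> (\<forall>x y. D (x + y) = D x + D y) \<and> (\<forall>x y. D (x * y) = x * D y + y * D x)"

definition Eb :: "('a::comm_ring_1 \<Rightarrow> 'a) \<Rightarrow> 'a poly \<Rightarrow> nat \<Rightarrow> bool" where
  "Eb D f e \<longleftrightarrow> (\<forall>k. (D^^(k+e+1)) (coeff f k) = 0)"

lemma der_add: "der D \<Longrightarrow> \<forall>x y. D (x + y) = D x + D y" by (simp add: der_def)
lemma der_mul: "der D \<Longrightarrow> \<forall>x y. D (x * y) = x * D y + y * D x" by (simp add: der_def)

lemma upper:
  fixes D :: "'a::comm_ring_1 \<Rightarrow> 'a"
  assumes d: "der D" and a: "(D^^Suc p) a = 0" and b: "(D^^Suc q) b = 0"
  shows "(D^^Suc (p+q)) (a*b) = 0"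
proof -
  have a2: "(D^^Suc (Suc p)) a = 0" by (rule Dn_mono[OF der_add[OF d] a]) simp
  have "(D^^(Suc p+q)) (a*b) = of_nat ((Suc p+q) choose Suc p) * (D^^Suc p) a * (D^^q) b"
    using leibniz[OF der_add[OF d] der_mul[OF d]] a2 b by blast
  then show ?thesis using a by simp
qed

lemma exact:
  fixes D :: "'a::{idom,ring_char_0} \<Rightarrow> 'a"
  assumes d: "der D" and a: "(D^^Suc p) a = 0" and b: "(D^^Suc q) b = 0"
    and a0: "(D^^p) a \<noteq> 0" and b0: "(D^^q) b \<noteq> 0"
  shows "(D^^(p+q)) (a*b) \<noteq> 0"
proof -
  have "(D^^(p+q)) (a*b) = of_nat ((p+q) choose p) * (D^^p) a * (D^^q) b"
    using leibniz[OF der_add[OF d] der_mul[OF d]] a b by blast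
  moreover have "of_nat ((p+q) choose p) \<noteq> (0::'a)" by simp
  ultimately show ?thesis using a0 b0 by simp
qed

lemma D1: fixes D :: "'a::comm_ring_1 \<Rightarrow> 'a" assumes d: "der D" shows "D 1 = 0"
proof -
  have h: "D 1 = D 1 + D 1" using der_mul[OF d, rule_format, of 1 1] by (simp only: mult_1_left mult_1_right)
  show ?thesis by (rule add_cancel_right_right[THEN iffD1, OF h])
qed

lemma Eb_mono: assumes d: "der D" and "Eb D f e" "e \<le> e'" shows "Eb D f e'"
  unfolding Eb_def
proof
  fix k
  have "(D^^(k+e+1)) (coeff f k) = 0" using assms(2) by (simp add: Eb_def)
  then show "(D^^(k+e'+1)) (coeff f k) = 0" by (rule Dn_mono[OF der_add[OF d]]) (use assms(3) in simp)
qed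

lemma Eb_add: assumes d: "der D" and "Eb D f e" "Eb D g e" shows "Eb D (f+g) e"
  using assms(2,3) by (simp add: Eb_def Dn_add[OF der_add[OF d]])

lemma Eb_uminus: assumes d: "der D" and "Eb D f e" shows "Eb D (-f) e"
  using assms(2) by (simp add: Eb_def Dn_uminus[OF der_add[OF d]])

lemma Eb_zero: assumes d: "der D" shows "Eb D 0 e"
  by (simp add: Eb_def Dn_0[OF der_add[OF d]])

lemma Eb_sum: assumes d: "der D" and "\<And>i. i \<in> A \<Longrightarrow> Eb D (f i) e" shows "Eb D (sum f A) e"
  using assms(2)
proof (induction A rule: infinite_finite_induct)
  case (infinite A) then show ?case by (simp add: Eb_zero[OF d])
next
  case empty then show ?case by (simp add: Eb_zero[OF d])
next
  case (insert x F) then show ?case by (simp add: Eb_add[OF d])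
qed

lemma Eb_mult: assumes d: "der D" and f: "Eb D f e1" and g: "Eb D g e2" shows "Eb D (f*g) (e1+e2)"
  unfolding Eb_def
proof
  fix k
  have "(D^^(k+(e1+e2)+1)) (coeff f i * coeff g (k-i)) = 0" if "i \<le> k" for i
  proof -
    have 1: "(D^^Suc (i+e1)) (coeff f i) = 0" using f by (simp add: Eb_def)
    have 2: "(D^^Suc ((k-i)+e2)) (coeff g (k-i)) = 0" using g by (simp add: Eb_def)
    have "(D^^Suc ((i+e1)+((k-i)+e2))) (coeff f i * coeff g (k-i)) = 0" by (rule upper[OF d 1 2])
    moreover have "Suc ((i+e1)+((k-i)+e2)) = k+(e1+e2)+1" using that by simp
    ultimately show ?thesis by metis
  qed
  then show "(D^^(k+(e1+e2)+1)) (coeff (f*g) k) = 0"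
    by (simp add: coeff_mult Dn_sum[OF der_add[OF d]])
qed

lemma Eb_one: assumes d: "der D" shows "Eb D 1 e"
  unfolding Eb_def
proof
  fix k
  have "(D^^Suc 0) 1 = 0" using D1[OF d] by (simp add: funpow.simps(2))
  then have "(D^^(k+e+1)) 1 = 0" by (rule Dn_mono[OF der_add[OF d]]) simp
  then show "(D^^(k+e+1)) (coeff 1 k) = 0" by (cases k) (simp_all add: Dn_0[OF der_add[OF d]])
qed

lemma Eb_pow: assumes d: "der D" and f: "Eb D f e" shows "Eb D (f^j) (j*e)"
proof (induction j)
  case 0 then show ?case by (simp add: Eb_one[OF d])
next
  case (Suc j)
  have "Eb D (f * f^j) (e + j*e)" by (rule Eb_mult[OF d f Suc.IH])
  then show ?case by simp
qed

lemma Eb_pCons: assumes d: "der D" and f: "Eb D f e" and a: "(D^^n) a = 0"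
  shows "Eb D (pCons a f) (max e n)"
  unfolding Eb_def
proof
  fix k
  show "(D^^(k+max e n+1)) (coeff (pCons a f) k) = 0"
  proof (cases k)
    case 0
    then show ?thesis using Dn_mono[OF der_add[OF d] a, of "k+max e n+1"] by simp
  next
    case (Suc k')
    have "(D^^(k'+e+1)) (coeff f k') = 0" using f by (simp add: Eb_def)
    then have "(D^^(k+max e n+1)) (coeff f k') = 0" by (rule Dn_mono[OF der_add[OF d]]) (use Suc in simp)
    then show ?thesis using Suc by simp
  qed
qed

lemma Eb_exists: assumes d: "der D" and ln: "locally_nilpotent D" shows "\<exists>e. Eb D f e"
proof (induction f)
  case 0
  then show ?case using Eb_zero[OF d] by blast
next
  case (pCons a f)
  then obtain e where e: "Eb D f e" by blast
  obtain n where "(D^^n) a = 0" using ln by (auto simp: locally_nilpotent_def)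
  then show ?case using Eb_pCons[OF d e] by blast
qed

lemma rees_Eb: "f \<in> rees_algebra D \<longleftrightarrow> Eb D f 0"
  by (simp add: rees_algebra_def Eb_def)



lemma gauss:
  fixes D :: "'a::{idom,ring_char_0} \<Rightarrow> 'a"
  assumes d: "der D" and f1: "Eb D f (Suc a)" and f0: "\<not> Eb D f a"
    and g1: "Eb D g (Suc b)" and g0: "\<not> Eb D g b"
  shows "\<not> Eb D (f*g) (Suc (a+b))"
proof -
  define P where "P = (\<lambda>k. (D^^(k+a+1)) (coeff f k) \<noteq> 0)"
  define Q where "Q = (\<lambda>k. (D^^(k+b+1)) (coeff g k) \<noteq> 0)"
  have "\<exists>k. P k" using f0 by (auto simp: Eb_def P_def)
  then have Pi: "P (LEAST k. P k)" by (rule LeastI_ex)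
  have "\<exists>k. Q k" using g0 by (auto simp: Eb_def Q_def)
  then have Qj: "Q (LEAST k. Q k)" by (rule LeastI_ex)
  define i0 where "i0 = (LEAST k. P k)"
  define j0 where "j0 = (LEAST k. Q k)"
  have lt_i: "(D^^Suc (i+a)) (coeff f i) = 0" if "i < i0" for i
    using not_less_Least[OF that[unfolded i0_def]] by (simp add: P_def)
  have lt_j: "(D^^Suc (j+b)) (coeff g j) = 0" if "j < j0" for j
    using not_less_Least[OF that[unfolded j0_def]] by (simp add: Q_def)
  have fa: "(D^^Suc (i+a+1)) (coeff f i) = 0" for i using f1 by (simp add: Eb_def)
  have gb: "(D^^Suc (j+b+1)) (coeff g j) = 0" for j using g1 by (simp add: Eb_def)
  define N where "N = i0 + j0"
  define M where "M = N + Suc (a+b) + 1"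
  have terms: "(D^^M) (coeff f i * coeff g (N-i)) = 0" if "i \<le> N" "i \<noteq> i0" for i
  proof (cases "i < i0")
    case True
    have "(D^^Suc ((i+a) + ((N-i)+b+1))) (coeff f i * coeff g (N-i)) = 0"
      by (rule upper[OF d lt_i[OF True] gb])
    moreover have "Suc ((i+a) + ((N-i)+b+1)) = M" using that by (simp add: M_def)
    ultimately show ?thesis by metis
  next
    case False
    then have "N - i < j0" using that by (simp add: N_def)
    have "(D^^Suc ((i+a+1) + ((N-i)+b))) (coeff f i * coeff g (N-i)) = 0"
      by (rule upper[OF d fa lt_j[OF \<open>N - i < j0\<close>]])
    moreover have "Suc ((i+a+1) + ((N-i)+b)) = M" using that by (simp add: M_def)
    ultimately show ?thesis by metis
  qed
  have main: "(D^^M) (coeff f i0 * coeff g (N-i0)) \<noteq> 0"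
  proof -
    have "(D^^((i0+a+1) + (j0+b+1))) (coeff f i0 * coeff g j0) \<noteq> 0"
      by (rule exact[OF d fa gb]) (use Pi Qj in \<open>simp_all add: P_def Q_def i0_def j0_def\<close>)
    moreover have "(i0+a+1) + (j0+b+1) = M" "N - i0 = j0" by (simp_all add: M_def N_def)
    ultimately show ?thesis by metis
  qed
  have "(D^^M) (coeff (f*g) N) = (\<Sum>i\<le>N. (D^^M) (coeff f i * coeff g (N-i)))"
    by (simp add: coeff_mult Dn_sum[OF der_add[OF d]])
  also have "... = (D^^M) (coeff f i0 * coeff g (N-i0)) + (\<Sum>i\<in>{..N}-{i0}. (D^^M) (coeff f i * coeff g (N-i)))"
    by (rule sum.remove) (simp_all add: N_def)
  also have "(\<Sum>i\<in>{..N}-{i0}. (D^^M) (coeff f i * coeff g (N-i))) = 0"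
    by (rule sum.neutral) (use terms in auto)
  finally have "(D^^M) (coeff (f*g) N) \<noteq> 0" using main by simp
  then show ?thesis unfolding Eb_def M_def by auto
qed

lemma gauss_pow:
  fixes D :: "'a::{idom,ring_char_0} \<Rightarrow> 'a"
  assumes d: "der D" and h1: "Eb D h (Suc e)" and h0: "\<not> Eb D h e"
  shows "\<not> Eb D (h^Suc j) (Suc j * Suc e - 1)"
proof (induction j)
  case 0
  then show ?case using h0 by simp
next
  case (Suc j)
  have "Eb D (h^Suc j) (Suc j * Suc e)" using Eb_pow[OF d h1] by blast
  moreover have "Suc j * Suc e = Suc (Suc j * Suc e - 1)" by simp
  ultimately have a: "Eb D (h^Suc j) (Suc (Suc j * Suc e - 1))" by metis
  have "\<not> Eb D (h * h^Suc j) (Suc (e + (Suc j * Suc e - 1)))"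
    by (rule gauss[OF d h1 h0 a Suc.IH])
  moreover have "Suc (e + (Suc j * Suc e - 1)) = Suc (Suc j) * Suc e - 1" by simp
  ultimately show ?case by (metis power_Suc)
qed

lemma valuation_main:
  fixes D :: "'a::{idom,ring_char_0} \<Rightarrow> 'a"
  assumes d: "der D" and ln: "locally_nilpotent D"
    and cn: "c n = 1" and ci: "\<And>i. Eb D (c i) 0" and eq: "(\<Sum>i\<le>n. c i * h^i) = 0"
  shows "Eb D h 0"
proof (rule ccontr)
  assume nh: "\<not> Eb D h 0"
  have ex: "\<exists>e. Eb D h e" by (rule Eb_exists[OF d ln])
  define e0 where "e0 = (LEAST e. Eb D h e)"
  have he0: "Eb D h e0" unfolding e0_def by (rule LeastI_ex[OF ex])
  have "e0 \<noteq> 0"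
  proof
    assume "e0 = 0" then show False using nh he0 by simp
  qed
  then obtain e where e0: "e0 = Suc e" using not0_implies_Suc by blast
  have h1: "Eb D h (Suc e)" using he0 e0 by simp
  have h0: "\<not> Eb D h e" using not_less_Least[of e "\<lambda>e. Eb D h e"] e0 e0_def by simp
  have "n \<noteq> 0"
  proof
    assume "n = 0" then show False using eq cn by simp
  qed
  then obtain m where n: "n = Suc m" using not0_implies_Suc by blast
  have "(\<Sum>i\<le>m. c i * h^i) + h^Suc m = 0" using eq cn n by simp
  then have hn: "h^Suc m = - (\<Sum>i\<le>m. c i * h^i)" by (simp add: eq_neg_iff_add_eq_0 add.commute)
  have "Eb D (\<Sum>i\<le>m. c i * h^i) (Suc m * Suc e - 1)"
  proof (rule Eb_sum[OF d])
    fix i assume "i \<in> {..m}"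
    then have "i \<le> m" by simp
    then have "i * Suc e \<le> m * Suc e" by (rule mult_le_mono1)
    moreover have "Suc m * Suc e - 1 = m * Suc e + e" by simp
    ultimately have le: "i * Suc e \<le> Suc m * Suc e - 1" by simp
    have "Eb D (c i * h^i) (0 + i * Suc e)" by (rule Eb_mult[OF d ci Eb_pow[OF d h1]])
    then show "Eb D (c i * h^i) (Suc m * Suc e - 1)" by (rule Eb_mono[OF d]) (use le in simp)
  qed
  then have "Eb D (h^Suc m) (Suc m * Suc e - 1)" unfolding hn by (rule Eb_uminus[OF d])
  then show False using gauss_pow[OF d h1 h0, of m] by simp
qed



lemma homog:
  fixes q h :: "'b::comm_ring_1"
  shows "(\<Sum>i\<le>n. c i * (q*h)^i * q^(n-i)) = q^n * (\<Sum>i\<le>n. c i * h^i)"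
proof -
  have "c i * (q*h)^i * q^(n-i) = q^n * (c i * h^i)" if "i \<le> n" for i
  proof -
    have "q^i * q^(n-i) = q^n" using that by (simp add: power_add[symmetric])
    then show ?thesis by (simp add: power_mult_distrib algebra_simps)
  qed
  then show ?thesis by (simp add: sum_distrib_left)
qed

lemma closed_sum:
  assumes S0: "0 \<in> S" and Sadd: "\<forall>x\<in>S. \<forall>y\<in>S. x + y \<in> S" and "\<And>i. i \<in> A \<Longrightarrow> f i \<in> S"
  shows "sum f A \<in> S"
  using assms(3)
proof (induction A rule: infinite_finite_induct)
  case (insert x F) then show ?case using Sadd by simp
qed (use S0 in auto)

lemma closed_coeff_mult:
  fixes S :: "'b::comm_ring_1 set"
  assumes S0: "0 \<in> S" and Sadd: "\<forall>x\<in>S. \<forall>y\<in>S. x + y \<in> S" and Smul: "\<forall>x\<in>S. \<forall>y\<in>S. x * y \<in> S"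
    and p: "\<forall>i. coeff p i \<in> S" and q: "\<forall>i. coeff q i \<in> S"
  shows "coeff (p*q) k \<in> S"
  unfolding coeff_mult by (rule closed_sum[OF S0 Sadd]) (use p q Smul in auto)

lemma closed_of_nat:
  assumes S0: "0 \<in> S" and S1: "1 \<in> S" and Sadd: "\<forall>x\<in>S. \<forall>y\<in>S. x + y \<in> S"
  shows "of_nat m \<in> S"
  by (induction m) (use assms in auto)

lemma interp:
  fixes S :: "'b::field set"
  assumes S0: "0 \<in> S" and S1: "1 \<in> S" and Sadd: "\<forall>x\<in>S. \<forall>y\<in>S. x + y \<in> S"
    and Smul: "\<forall>x\<in>S. \<forall>y\<in>S. x * y \<in> S" and Sneg: "\<forall>x\<in>S. - x \<in> S"
    and Sinv: "\<And>d::nat. d > 0 \<Longrightarrow> inverse (of_nat d) \<in> S"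
    and inj: "\<And>m n::nat. (of_nat m :: 'b) = of_nat n \<Longrightarrow> m = n"
  shows "(\<forall>m\<ge>N. poly f (of_nat m) \<in> S) \<Longrightarrow> \<forall>i. coeff f i \<in> S"
proof (induction "degree f" arbitrary: f N rule: less_induct)
  case less
  show ?case
  proof (cases "degree f = 0")
    case True
    have "poly f (of_nat N) = coeff f 0" using True by (simp add: poly_altdef)
    then have "coeff f 0 \<in> S" using less.prems by auto
    then show ?thesis using True S0 coeff_eq_0[of f] by (metis gr0I)
  next
    case False
    define c0 where "c0 = poly f (of_nat N)"
    have c0S: "c0 \<in> S" using less.prems c0_def by auto
    define g where "g = f - [:c0:]"
    have "poly g (of_nat N) = 0" by (simp add: g_def c0_def)
    then obtain h where gh: "g = [:- of_nat N, 1:] * h" using poly_eq_0_iff_dvd by blast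
    have cg: "coeff g i = coeff f i" if "i > 0" for i using that by (simp add: g_def coeff_pCons split: nat.splits)
    have "f \<noteq> 0" using False by auto
    have "coeff g (degree f) \<noteq> 0" using False cg \<open>f \<noteq> 0\<close> by simp
    then have "g \<noteq> 0" by auto
    then have "h \<noteq> 0" using gh by auto
    have dgf: "degree g = degree f"
    proof (rule antisym)
      show "degree g \<le> degree f" by (rule degree_le) (use cg coeff_eq_0 in auto)
      show "degree f \<le> degree g" by (rule le_degree) (use \<open>coeff g (degree f) \<noteq> 0\<close> in simp)
    qed
    have nz1: "[:- of_nat N, 1:] \<noteq> (0::'b poly)" by simp
    have "degree g = degree ([:- of_nat N, 1:]::'b poly) + degree h" unfolding gh
      using degree_mult_eq[OF nz1 \<open>h \<noteq> 0\<close>] by metis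
    then have dlt: "degree h < degree f" using dgf by simp
    have hv: "\<forall>m\<ge>Suc N. poly h (of_nat m) \<in> S"
    proof (intro allI impI)
      fix m assume m: "Suc N \<le> m"
      have "poly g (of_nat m) = (of_nat m - of_nat N) * poly h (of_nat m)" by (simp add: gh algebra_simps)
      also have "of_nat m - of_nat N = (of_nat (m - N) :: 'b)" using m by (simp add: of_nat_diff)
      finally have e: "poly g (of_nat m) = of_nat (m - N) * poly h (of_nat m)" .
      have nz: "(of_nat (m - N) :: 'b) \<noteq> 0" using inj[of "m-N" 0] m by auto
      have "poly h (of_nat m) = poly g (of_nat m) * inverse (of_nat (m - N))"
        using e nz by (simp add: field_simps)
      moreover have "poly g (of_nat m) \<in> S"
      proof -
        have a1: "poly f (of_nat m) \<in> S" using less.prems m by auto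
        have a2: "- c0 \<in> S" using Sneg c0S by auto
        have "poly f (of_nat m) + - c0 \<in> S" using Sadd a1 a2 by blast
        then show ?thesis by (simp add: g_def)
      qed
      moreover have "inverse (of_nat (m - N)) \<in> S" using Sinv[of "m - N"] m by simp
      ultimately show "poly h (of_nat m) \<in> S" using Smul by simp
    qed
    have hc: "\<forall>i. coeff h i \<in> S" by (rule less.hyps[OF dlt hv])
    have lc: "\<forall>i. coeff [:- of_nat N, 1:] i \<in> S"
    proof
      fix i show "coeff [:- of_nat N, 1:] i \<in> S"
        using Sneg closed_of_nat[OF S0 S1 Sadd, of N] S0 S1
        by (cases i) (auto simp: coeff_pCons split: nat.splits)
    qed
    have "f = [:c0:] + g" by (simp add: g_def)
    then have f: "f = [:c0:] + [:- of_nat N, 1:] * h" by (simp only: gh)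
    show ?thesis
    proof
      fix i
      have "coeff ([:- of_nat N, 1:] * h) i \<in> S"
        by (rule closed_coeff_mult[OF S0 Sadd Smul lc hc])
      moreover have "coeff [:c0:] i \<in> S" using c0S S0 by (cases i) auto
      ultimately show "coeff f i \<in> S" using Sadd by (subst f) simp
    qed
  qed
qed

lemma field_poly_closed:
  fixes p q :: "'k::field poly" and C :: "nat \<Rightarrow> 'k poly"
  assumes q0: "q \<noteq> 0" and Cn: "C n = 1" and eq: "(\<Sum>i\<le>n. C i * p^i * q^(n-i)) = 0"
  shows "q dvd p"
proof -
  define P where "P = (\<lambda>m. \<exists>a b. a*p + b*q \<noteq> 0 \<and> degree (a*p+b*q) = m)"
  have "P (degree q)" unfolding P_def by (rule exI[of _ 0], rule exI[of _ 1]) (use q0 in simp)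
  then have "P (LEAST m. P m)" by (rule LeastI)
  then obtain a b where d0: "a*p+b*q \<noteq> 0" and dm: "degree (a*p+b*q) = (LEAST m. P m)"
    unfolding P_def by blast
  define d where "d = a*p+b*q"
  have mini: "degree d \<le> degree (a'*p+b'*q)" if "a'*p+b'*q \<noteq> 0" for a' b'
    unfolding d_def dm by (rule Least_le) (use that in \<open>auto simp: P_def\<close>)
  have dvd_d: "d dvd a'*p+b'*q" for a' b'
  proof -
    define r where "r = (a'*p+b'*q) mod d"
    have "r = (a'*p+b'*q) - ((a'*p+b'*q) div d) * d" by (simp add: r_def minus_div_mult_eq_mod)
    also have "... = (a' - ((a'*p+b'*q) div d)*a) * p + (b' - ((a'*p+b'*q) div d)*b) * q"
      by (simp add: d_def algebra_simps)
    finally have r: "r = (a' - ((a'*p+b'*q) div d)*a) * p + (b' - ((a'*p+b'*q) div d)*b) * q" .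
    have "r = 0"
    proof (rule ccontr)
      assume "r \<noteq> 0"
      then have "degree r < degree d" using degree_mod_less[of d "a'*p+b'*q"] d0 d_def r_def by auto
      moreover have "degree d \<le> degree r" using mini \<open>r \<noteq> 0\<close> r by metis
      ultimately show False by simp
    qed
    then show ?thesis by (simp add: r_def mod_eq_0_iff_dvd)
  qed
  have "d dvd 1*p+0*q" by (rule dvd_d)
  then obtain p1 where p1: "p = d*p1" by auto
  have "d dvd 0*p+1*q" by (rule dvd_d)
  then obtain q1 where q1: "q = d*q1" by auto
  have dnz: "d \<noteq> 0" using d0 d_def by simp
  have bez: "a*p1 + b*q1 = 1"
  proof -
    have "d * (a*p1 + b*q1) = a*(d*p1) + b*(d*q1)" by (simp add: algebra_simps)
    also have "... = a*p + b*q" using p1 q1 by simp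
    also have "... = d * 1" by (simp add: d_def)
    finally have "d * (a*p1 + b*q1) = d * 1" .
    then show ?thesis using dnz by simp
  qed
  have "d^n * (\<Sum>i\<le>n. C i * p1^i * q1^(n-i)) = 0"
  proof -
    have th: "C i * p^i * q^(n-i) = d^n * (C i * p1^i * q1^(n-i))" if "i \<le> n" for i
    proof -
      have "d^i * d^(n-i) = d^n" using that by (simp add: power_add[symmetric])
      then show ?thesis unfolding p1 q1 by (simp add: power_mult_distrib algebra_simps)
    qed
    have "(\<Sum>i\<le>n. C i * p^i * q^(n-i)) = d^n * (\<Sum>i\<le>n. C i * p1^i * q1^(n-i))"
      unfolding sum_distrib_left by (rule sum.cong[OF refl], rule th, simp)
    then show ?thesis using eq by simp
  qed
  then have eq1: "(\<Sum>i\<le>n. C i * p1^i * q1^(n-i)) = 0" using dnz by simp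
  have "n \<noteq> 0"
  proof
    assume "n = 0" then show False using eq1 Cn by simp
  qed
  then obtain m where n: "n = Suc m" using not0_implies_Suc by blast
  have "(\<Sum>i\<le>m. C i * p1^i * q1^(n-i)) + p1^n = 0" using eq1 Cn n by simp
  then have pn: "p1^n = - (\<Sum>i\<le>m. C i * p1^i * q1^(n-i))" by (simp add: eq_neg_iff_add_eq_0 add.commute)
  have "q1 dvd (\<Sum>i\<le>m. C i * p1^i * q1^(n-i))"
  proof (rule dvd_sum)
    fix i assume "i \<in> {..m}"
    then have "n - i = Suc (m - i)" using n by auto
    then show "q1 dvd C i * p1^i * q1^(n-i)" by simp
  qed
  then have "q1 dvd p1^n" using pn by simp
  have desc: "q1 dvd p1^k \<Longrightarrow> q1 dvd 1" for k
  proof (induction k)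
    case 0 then show ?case by simp
  next
    case (Suc k)
    have "p1^k = a * p1^Suc k + b * q1 * p1^k"
    proof -
      have "p1^k = p1^k * (a*p1 + b*q1)" using bez by simp
      then show ?thesis by (simp add: algebra_simps)
    qed
    then have "q1 dvd p1^k" using Suc.prems by (metis dvd_add dvd_mult dvd_mult2 dvd_triv_right)
    then show ?case by (rule Suc.IH)
  qed
  have "q1 dvd 1" by (rule desc) fact
  then have "q1 dvd p1" by (rule dvd_trans) simp
  then show ?thesis unfolding p1 q1 by simp
qed



lemma to_fract_power: "to_fract (x^n) = to_fract x ^ n"
  by (induction n) simp_all

lemma fract_poly_power: "fract_poly (p^n) = fract_poly p ^ n"
  by (induction n) (simp_all del: fract_poly_eq_iff)

lemma fract_poly_sum: "fract_poly (sum f A) = (\<Sum>i\<in>A. fract_poly (f i))"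
  by (induction A rule: infinite_finite_induct) (simp_all del: fract_poly_eq_iff)

lemma poly_fract: "poly (fract_poly p) (to_fract x) = to_fract (poly p x)"
  by (induction p) (simp_all add: map_poly_pCons)

lemma to_fract_alt: "(\<lambda>a. Fract a 1) = to_fract"
  by (rule ext) (simp add: to_fract_def)

lemma clear_denom:
  fixes p q :: "'b::idom"
  assumes q0: "q \<noteq> 0" and eq: "(\<Sum>i\<le>n. to_fract (c i) * Fract p q ^ i) = 0"
  shows "(\<Sum>i\<le>n. c i * p^i * q^(n-i)) = 0"
proof -
  have tq: "to_fract q \<noteq> 0" using q0 by simp
  have "to_fract q ^ n * to_fract (c i) * Fract p q ^ i = to_fract (c i * p^i * q^(n-i))" if "i \<le> n" for i
  proof -
    have tqn: "to_fract q ^ n = to_fract q ^ i * to_fract q ^ (n-i)" using that by (simp add: power_add[symmetric])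
    have e1: "Fract p q ^ i = to_fract p ^ i / to_fract q ^ i" by (simp add: Fract_conv_to_fract power_divide)
    have e2: "to_fract q ^ i * (to_fract p ^ i / to_fract q ^ i) = to_fract p ^ i" using tq by simp
    have "to_fract q ^ n * to_fract (c i) * Fract p q ^ i
        = to_fract (c i) * to_fract q ^ (n-i) * (to_fract q ^ i * (to_fract p ^ i / to_fract q ^ i))"
      unfolding e1 tqn by (simp only: ac_simps)
    also have "... = to_fract (c i) * to_fract q ^ (n-i) * to_fract p ^ i" by (simp only: e2)
    also have "... = to_fract (c i * p^i * q^(n-i))" by (simp add: to_fract_power ac_simps)
    finally show ?thesis .
  qed
  then have "to_fract q ^ n * (\<Sum>i\<le>n. to_fract (c i) * Fract p q ^ i) = to_fract (\<Sum>i\<le>n. c i * p^i * q^(n-i))"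
    unfolding sum_distrib_left to_fract_sum by (intro sum.cong refl) (simp add: mult.assoc[symmetric])
  then have "to_fract (\<Sum>i\<le>n. c i * p^i * q^(n-i)) = 0" by (simp only: eq mult_zero_right)
  then show ?thesis by (simp only: to_fract_eq_0_iff)
qed

lemma extract_int:
  assumes "integral_over S x"
  obtains n c where "c n = 1" "\<forall>i. c i \<in> S" "(\<Sum>i\<le>n. to_fract (c i) * x^i) = 0"
proof -
  obtain P where P: "\<forall>i. coeff P i \<in> S" "lead_coeff P = 1" "poly (map_poly to_fract P) x = 0"
    using assms unfolding integral_over_def to_fract_alt by blast
  have dm: "degree (map_poly to_fract P) = degree P" by (rule degree_map_poly) simp
  have "poly (map_poly to_fract P) x = (\<Sum>i\<le>degree P. to_fract (coeff P i) * x^i)"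
    unfolding poly_altdef dm by (simp add: coeff_map_poly)
  then show ?thesis using that[of "coeff P" "degree P"] P by simp
qed

lemma construct_int:
  fixes c :: "nat \<Rightarrow> 'a::idom"
  assumes cn: "c n = 1" and eq: "(\<Sum>i\<le>n. to_fract (c i) * y^i) = 0"
  shows "integral_over UNIV y"
proof -
  define P where "P = (\<Sum>i\<le>n. monom (c i) i)"
  have cP: "coeff P i = (if i \<le> n then c i else 0)" for i
    by (simp add: P_def coeff_sum coeff_monom)
  have dP: "degree P = n"
  proof (rule antisym)
    show "degree P \<le> n" by (rule degree_le) (simp add: cP)
    show "n \<le> degree P" by (rule le_degree) (simp add: cP cn)
  qed
  have dm: "degree (map_poly to_fract P) = n" using dP by (simp add: degree_map_poly)
  have "poly (map_poly to_fract P) y = (\<Sum>i\<le>n. to_fract (c i) * y^i)"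
    unfolding poly_altdef dm by (intro sum.cong refl) (simp add: coeff_map_poly cP)
  then show ?thesis unfolding integral_over_def to_fract_alt
    using eq cn dP by (intro exI[of _ P]) (simp add: cP)
qed

lemma normal_elem:
  fixes y :: "'a::idom fract"
  assumes nA: "normal_subring (UNIV :: 'a set)" and cn: "c n = 1"
    and eq: "(\<Sum>i\<le>n. to_fract (c i) * y^i) = 0"
  shows "y \<in> range to_fract"
proof -
  have "y \<in> frac_field_of UNIV" unfolding frac_field_of_def
    by (cases y) auto
  moreover have "integral_over UNIV y" by (rule construct_int[OF cn eq])
  ultimately have "y \<in> (\<lambda>a. Fract a 1) ` UNIV" using nA unfolding normal_subring_def by blast
  then show ?thesis unfolding to_fract_alt .
qed



lemma stepA:
  fixes p q :: "'a::{idom,ring_char_0} poly" and c :: "nat \<Rightarrow> 'a poly"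
  assumes nA: "normal_subring (UNIV :: 'a set)" and Qin: "\<And>d::nat. d > 0 \<Longrightarrow> \<exists>a::'a. of_nat d * a = 1"
    and q0: "q \<noteq> 0" and cn: "c n = 1" and eq: "(\<Sum>i\<le>n. c i * p^i * q^(n-i)) = 0"
  shows "\<exists>h. p = q * h"
proof -
  define P' where "P' = fract_poly p"
  define Q' where "Q' = fract_poly q"
  define C where "C = (\<lambda>i. fract_poly (c i))"
  have "fract_poly (\<Sum>i\<le>n. c i * p^i * q^(n-i)) = 0" using eq by simp
  then have eqK: "(\<Sum>i\<le>n. C i * P'^i * Q'^(n-i)) = 0"
    unfolding fract_poly_sum C_def P'_def Q'_def by (simp add: fract_poly_power del: fract_poly_eq_iff)
  have Q'0: "Q' \<noteq> 0" using q0 by (simp add: Q'_def)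
  have Cn: "C n = 1" using cn by (simp add: C_def)
  have "Q' dvd P'" by (rule field_poly_closed[OF Q'0 Cn eqK])
  then obtain f where f: "P' = Q' * f" by blast
  have "Q'^n * (\<Sum>i\<le>n. C i * f^i) = 0" using eqK unfolding f homog .
  then have eqf: "(\<Sum>i\<le>n. C i * f^i) = 0" using Q'0 by simp
  have vals: "\<forall>m\<ge>0. poly f (of_nat m) \<in> range to_fract"
  proof (intro allI impI)
    fix m :: nat
    have om: "(of_nat m :: 'a fract) = to_fract (of_nat m)" by (simp add: to_fract_def Fract_of_nat_eq)
    have "poly (\<Sum>i\<le>n. C i * f^i) (to_fract (of_nat m)) = 0" using eqf by simp
    then have "(\<Sum>i\<le>n. to_fract (poly (c i) (of_nat m)) * poly f (to_fract (of_nat m))^i) = 0"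
      unfolding poly_sum by (simp add: C_def poly_fract)
    moreover have "poly (c n) (of_nat m) = (1::'a)" using cn by simp
    ultimately have "poly f (to_fract (of_nat m)) \<in> range to_fract"
      by (intro normal_elem[OF nA, of "\<lambda>i. poly (c i) (of_nat m)" n]) auto
    then show "poly f (of_nat m) \<in> range to_fract" unfolding om .
  qed
  have S0: "0 \<in> range to_fract" by (metis rangeI to_fract_0)
  have S1: "1 \<in> range to_fract" by (metis rangeI to_fract_1)
  have Sadd: "\<forall>x\<in>range to_fract. \<forall>y\<in>range to_fract. x + y \<in> range (to_fract :: 'a \<Rightarrow> _)"
    by (auto simp del: to_fract_add simp: to_fract_add[symmetric])
  have Smul: "\<forall>x\<in>range to_fract. \<forall>y\<in>range to_fract. x * y \<in> range (to_fract :: 'a \<Rightarrow> _)"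
    by (auto simp del: to_fract_mult simp: to_fract_mult[symmetric])
  have Sneg: "\<forall>x\<in>range to_fract. - x \<in> range (to_fract :: 'a \<Rightarrow> _)"
    by (auto simp del: to_fract_uminus simp: to_fract_uminus[symmetric])
  have Sinv: "inverse (of_nat d) \<in> range (to_fract :: 'a \<Rightarrow> _)" if dpos: "d > 0" for d :: nat
  proof -
    obtain a :: 'a where a: "of_nat d * a = 1" using Qin[OF dpos] by blast
    have "to_fract (of_nat d) * to_fract a = (1 :: 'a fract)"
      by (simp del: to_fract_mult add: to_fract_mult[symmetric] a)
    then have "inverse (to_fract (of_nat d)) = to_fract a" by (rule inverse_unique)
    moreover have "(of_nat d :: 'a fract) = to_fract (of_nat d)" by (simp add: to_fract_def Fract_of_nat_eq)
    ultimately show ?thesis by simp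
  qed
  have inj: "m = n" if "(of_nat m :: 'a fract) = of_nat n" for m n :: nat
  proof -
    have e: "(of_nat k :: 'a fract) = to_fract (of_nat k)" for k
      by (simp add: to_fract_def Fract_of_nat_eq)
    have "to_fract (of_nat m :: 'a) = to_fract (of_nat n)" using that unfolding e .
    then have "(of_nat m :: 'a) = of_nat n" by (simp only: to_fract_eq_iff)
    then show ?thesis by simp
  qed
  have cf: "\<forall>i. coeff f i \<in> range to_fract"
    by (rule interp[OF S0 S1 Sadd Smul Sneg Sinv inj vals])
  define g where "g = (\<lambda>z::'a fract. SOME a. to_fract a = z)"
  have g0: "g 0 = 0" unfolding g_def by (rule some_equality) simp_all
  have gz: "to_fract (g z) = z" if "z \<in> range to_fract" for z
    unfolding g_def by (rule someI_ex) (use that in auto)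
  define h where "h = map_poly g f"
  have fh: "fract_poly h = f"
    by (rule poly_eqI) (simp add: h_def coeff_map_poly g0 gz cf)
  have "fract_poly p = fract_poly (q * h)" using f fh by (simp add: P'_def Q'_def)
  then have "p = q * h" by (simp only: fract_poly_eq_iff)
  then show ?thesis by blast
qed



theorem corollary2p5:
  fixes K :: "'a::{idom, ring_char_0} set" and D :: "'a \<Rightarrow> 'a"
  assumes "alg_closed_subfield K"
    and "normal_subring (UNIV :: 'a set)"
    and "is_derivation K D"
    and "locally_nilpotent D"
    and "\<exists>a. D a \<noteq> 0"
  shows "integral_subring (rees_algebra D) \<and> normal_subring (rees_algebra D)"
proof -
  have d: "der D" using assms(3) by (simp add: is_derivation_def der_def)
  have sf: "subfield_set K" using assms(1) by (simp add: alg_closed_subfield_def)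
  have sr: "subring_set K" using sf by (simp add: subfield_set_def)
  have natK: "of_nat m \<in> K" for m
  proof (induction m)
    case 0 then show ?case using sr by (simp add: subring_set_def)
  next
    case (Suc m)
    have "1 \<in> K" using sr by (simp add: subring_set_def)
    then have "1 + of_nat m \<in> K" using Suc sr by (simp add: subring_set_def)
    then show ?case by simp
  qed
  have Qin: "\<exists>a::'a. of_nat d * a = 1" if "d > 0" for d :: nat
  proof -
    have "(of_nat d :: 'a) \<noteq> 0" using that by simp
    moreover have inv: "\<forall>x\<in>K. x \<noteq> 0 \<longrightarrow> (\<exists>y\<in>K. x * y = 1)" using sf by (simp add: subfield_set_def)
    ultimately have "\<exists>y\<in>K. of_nat d * y = 1" using natK[of d] by simp
    then show ?thesis by auto
  qed
  have sub: "subring_set (rees_algebra D)"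
    unfolding subring_set_def
  proof (intro conjI ballI)
    show "0 \<in> rees_algebra D" unfolding rees_Eb by (rule Eb_zero[OF d])
    show "1 \<in> rees_algebra D" unfolding rees_Eb by (rule Eb_one[OF d])
    fix a b assume a: "a \<in> rees_algebra D" and b: "b \<in> rees_algebra D"
    then have a': "Eb D a 0" and b': "Eb D b 0" unfolding rees_Eb by auto
    show "a + b \<in> rees_algebra D" unfolding rees_Eb by (rule Eb_add[OF d a' b'])
    have "Eb D (a + - b) 0" by (rule Eb_add[OF d a' Eb_uminus[OF d b']])
    then show "a - b \<in> rees_algebra D" unfolding rees_Eb by simp
    have "Eb D (a * b) (0+0)" by (rule Eb_mult[OF d a' b'])
    then show "a * b \<in> rees_algebra D" unfolding rees_Eb by simp
  qed
  have integ: "integral_subring (rees_algebra D)"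
    unfolding integral_subring_def using sub by simp
  have norm: "x \<in> (\<lambda>a. Fract a 1) ` rees_algebra D"
    if x: "x \<in> frac_field_of (rees_algebra D)" and ix: "integral_over (rees_algebra D) x" for x
  proof -
    obtain p q where pq: "q \<noteq> 0" "x = Fract p q"
      using x unfolding frac_field_of_def by blast
    obtain n c where cn: "c n = 1" and cR: "\<forall>i. c i \<in> rees_algebra D"
      and eq: "(\<Sum>i\<le>n. to_fract (c i) * x^i) = 0"
      using extract_int[OF ix] by blast
    have eq2: "(\<Sum>i\<le>n. c i * p^i * q^(n-i)) = 0"
      by (rule clear_denom[OF pq(1)]) (use eq pq in simp)
    obtain h where h: "p = q * h" using stepA[OF assms(2) Qin pq(1) cn eq2] by blast
    have "q^n * (\<Sum>i\<le>n. c i * h^i) = 0" using eq2 unfolding h homog .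
    then have eqh: "(\<Sum>i\<le>n. c i * h^i) = 0" using pq(1) by simp
    have "Eb D h 0"
      by (rule valuation_main[OF d assms(4) cn _ eqh]) (use cR in \<open>simp add: rees_Eb\<close>)
    then have hR: "h \<in> rees_algebra D" by (simp add: rees_Eb)
    have "x = Fract h 1" using pq h by (simp add: eq_fract)
    then show ?thesis using hR by blast
  qed
  show ?thesis using integ norm by (simp add: normal_subring_def)
qed

end
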